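(* Let $\rho>0$ and assume $\Gamma(0)<\Gamma(1)$ and $1+\rho\ln\mu(0)<0$. Let $\nu_\star(\rho)$ be the unique solution in $(0,\mu(1))$ of $1+\rho\ln G(\nu,\mu(1))=0$, and assume $1+\rho\ln\big(\Gamma(1)^{\nu_\star(\rho)}\Gamma(0)^{1-\nu_\star(\rho)}\big)<0$. Let $n\mapsto L_n$ be a $\rho$-admissible scaling. Then $\nu$ can be selected in the interval $(\nu_\star(\rho),\mu(1))$ such that for every sequence $(\ell_n)$ that is $\nu$-associated with the scaling, $\lim_{n\to\infty}\mathbb{E}[I^{(\ell_n)}_n(L_n)]=\infty$.
   Context: Homogeneous binary MAG model. Fix $\mu(0),\mu(1)\in(0,1)$ with $\mu(0)+\mu(1)=1$, and a symmetric $2\times2$ matrix $(q(a,b))$ with $q(0,1)=q(1,0)$ and $0<q(a,b)<1$. On a probability space, $\{A,A_\ell(u):\ell,u\ge1\}$ are i.i.d. $\{0,1\}$-valued with $\mathbb{P}[A=1]=\mu(1)$, independent of i.i.d. uniform$(0,1)$ variables $\{U(u,v):1\le u<v\}$, $U(v,u)=U(u,v)$. With $\mathbf A_L(u)=(A_1(u),\dots,A_L(u))$ and $Q_L(\mathbf a,\mathbf b)=\prod_{\ell=1}^Lq(a_\ell,b_\ell)$, the graph $\mathbb{M}(n;L)$ on $\{1,\dots,n\}$ has an edge between distinct $u,v$ iff $U(u,v)\le Q_L(\mathbf A_L(u),\mathbf A_L(v))$. Let $S_L(u)=A_1(u)+\dots+A_L(u)$; for $\ell\in\{0,\dots,L\}$,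 $I^{(\ell)}_n(L)$ is the number of nodes $u\in\{1,\dots,n\}$ isolated in $\mathbb{M}(n;L)$ with $S_L(u)=\ell$. $\Gamma(a)=\mathbb{E}[q(a,A)]$. A scaling $n\mapsto L_n$ of positive integers is $\rho$-admissible if $L_n\sim\rho\ln n$. For $\nu\in(0,1)$, a sequence $(\ell_n)$ of nonnegative integers is $\nu$-associated with the scaling if $\ell_n\le L_n$ for all $n$ and $\ell_n/L_n\to\nu$. For $0<\nu,\mu<1$, $G(\nu,\mu)=(\mu/\nu)^\nu\big((1-\mu)/(1-\nu)\big)^{1-\nu}$, extended continuously to $[0,1]$ by $G(0,\mu)=1-\mu$, $G(1,\mu)=\mu$. *)

theory Defs
  imports "HOL-Probability.Probability" "HOL-Library.Landau_Symbols"
begin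

text \<open>Attributes are encoded as naturals 0 and 1. mu a = probability of attribute a,
  q a b = the 2x2 affinity matrix.\<close>

definition attr_pmf :: "(nat \<Rightarrow> real) \<Rightarrow> nat pmf" where
  "attr_pmf mu = map_pmf (\<lambda>b. if b then 1 else 0) (bernoulli_pmf (mu 1))"

definition attr_law :: "(nat \<Rightarrow> real) \<Rightarrow> nat \<Rightarrow> nat \<Rightarrow> (nat \<times> nat \<Rightarrow> nat) pmf" where
  "attr_law mu n L = Pi_pmf ({1..n} \<times> {1..L}) 0 (\<lambda>_. attr_pmf mu)"

definition unif_law :: "nat \<Rightarrow> (nat \<times> nat \<Rightarrow> real) measure" where
  "unif_law n = PiM {(u, v). 1 \<le> u \<and> u < v \<and> v \<le> n}
                    (\<lambda>_. uniform_measure lborel {0<..<1::real})"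

definition mag_space :: "(nat \<Rightarrow> real) \<Rightarrow> nat \<Rightarrow> nat \<Rightarrow> ((nat \<times> nat \<Rightarrow> nat) \<times> (nat \<times> nat \<Rightarrow> real)) measure" where
  "mag_space mu n L = measure_pmf (attr_law mu n L) \<Otimes>\<^sub>M unif_law n"

definition QL :: "(nat \<Rightarrow> nat \<Rightarrow> real) \<Rightarrow> nat \<Rightarrow> (nat \<times> nat \<Rightarrow> nat) \<Rightarrow> nat \<Rightarrow> nat \<Rightarrow> real" where
  "QL q L A u v = (\<Prod>l\<in>{1..L}. q (A (u, l)) (A (v, l)))"

definition SL :: "nat \<Rightarrow> (nat \<times> nat \<Rightarrow> nat) \<Rightarrow> nat \<Rightarrow> nat" where
  "SL L A u = (\<Sum>l\<in>{1..L}. A (u, l))"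

definition mag_edge :: "(nat \<Rightarrow> nat \<Rightarrow> real) \<Rightarrow> nat \<Rightarrow> (nat \<times> nat \<Rightarrow> nat) \<Rightarrow> (nat \<times> nat \<Rightarrow> real) \<Rightarrow> nat \<Rightarrow> nat \<Rightarrow> bool" where
  "mag_edge q L A U u v \<longleftrightarrow> u \<noteq> v \<and> U (min u v, max u v) \<le> QL q L A u v"

definition isolated_count :: "(nat \<Rightarrow> nat \<Rightarrow> real) \<Rightarrow> nat \<Rightarrow> nat \<Rightarrow> nat \<Rightarrow> (nat \<times> nat \<Rightarrow> nat) \<times> (nat \<times> nat \<Rightarrow> real) \<Rightarrow> nat" where
  "isolated_count q n L l \<omega> =
     card {u \<in> {1..n}. (\<forall>v\<in>{1..n}. \<not> mag_edge q L (fst \<omega>) (snd \<omega>) u v) \<and> SL L (fst \<omega>) u = l}"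

definition expected_isolated :: "(nat \<Rightarrow> real) \<Rightarrow> (nat \<Rightarrow> nat \<Rightarrow> real) \<Rightarrow> nat \<Rightarrow> nat \<Rightarrow> nat \<Rightarrow> real" where
  "expected_isolated mu q n L l = (\<integral>\<omega>. real (isolated_count q n L l \<omega>) \<partial>mag_space mu n L)"

definition Gam :: "(nat \<Rightarrow> real) \<Rightarrow> (nat \<Rightarrow> nat \<Rightarrow> real) \<Rightarrow> nat \<Rightarrow> real" where
  "Gam mu q a = mu 0 * q a 0 + mu 1 * q a 1"

definition G :: "real \<Rightarrow> real \<Rightarrow> real" where
  "G \<nu> m = (if \<nu> = 0 then 1 - m else if \<nu> = 1 then m
            else (m / \<nu>) powr \<nu> * ((1 - m) / (1 - \<nu>)) powr (1 - \<nu>))"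

definition nu_star :: "(nat \<Rightarrow> real) \<Rightarrow> real \<Rightarrow> real" where
  "nu_star mu \<rho> = (THE \<nu>. \<nu> \<in> {0<..<mu 1} \<and> 1 + \<rho> * ln (G \<nu> (mu 1)) = 0)"

definition admissible :: "real \<Rightarrow> (nat \<Rightarrow> nat) \<Rightarrow> bool" where
  "admissible \<rho> L \<longleftrightarrow> (\<forall>n. 0 < L n) \<and> (\<lambda>n. real (L n)) \<sim>[sequentially] (\<lambda>n. \<rho> * ln (real n))"

definition associated :: "real \<Rightarrow> (nat \<Rightarrow> nat) \<Rightarrow> (nat \<Rightarrow> nat) \<Rightarrow> bool" where
  "associated \<nu> L ls \<longleftrightarrow> (\<forall>n. ls n \<le> L n) \<and> (\<lambda>n. real (ls n) / real (L n)) \<longlonglongrightarrow> \<nu>"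

end

theory Submission
  imports Defs "HOL-Real_Asymp.Real_Asymp"
begin


lemma unif_prob: "prob_space (unif_law n)"
  unfolding unif_law_def
  by (intro prob_space_PiM prob_space_uniform_measure) auto

lemma unif_coord:
  assumes "1 \<le> i" "i < j" "j \<le> n" "0 \<le> c" "c \<le> 1"
  shows "measure (unif_law n) {y\<in>space (unif_law n). y (i,j) \<le> c} = c"
proof -
  let ?J = "{(u, v). 1 \<le> u \<and> u < v \<and> v \<le> (n::nat)}"
  let ?U = "uniform_measure lborel {0<..<1::real}"
  interpret product_prob_space "\<lambda>_. ?U" ?J
    by (simp add: product_prob_space_def product_sigma_finite_def prob_space_imp_sigma_finite
        prob_space_uniform_measure product_prob_space_axioms_def)
  have "emeasure (unif_law n) {y\<in>space (unif_law n). y (i,j) \<in> {..c}} = emeasure ?U {..c}"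
    unfolding unif_law_def using assms by (intro emeasure_PiM_Collect_single) auto
  hence "measure (unif_law n) {y\<in>space (unif_law n). y (i,j) \<le> c} = measure ?U {..c}"
    by (simp add: measure_def)
  also have "\<dots> = c"
  proof (cases "c < 1")
    case True
    hence "{0<..<1} \<inter> {..c} = {0<..c::real}" by auto
    thus ?thesis using assms True by simp
  next
    case False
    hence "{0<..<1} \<inter> {..c} = {0<..<1::real}" using assms by auto
    thus ?thesis using assms False by simp
  qed
  finally show ?thesis .
qed

lemma set_attr_pmf: "set_pmf (attr_pmf mu) \<subseteq> {0,1}"
  unfolding attr_pmf_def by auto

lemma expect_attr:
  assumes "0 \<le> mu 1" "mu 1 \<le> 1" "mu 0 + mu 1 = 1"
  shows "measure_pmf.expectation (attr_pmf mu) f = mu 0 * f 0 + mu 1 * f 1"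
proof -
  have "f 0 * mu 0 + f 0 * mu 1 = f 0" using assms(3) by (metis distrib_left mult.right_neutral)
  thus ?thesis unfolding attr_pmf_def using assms by (simp add: algebra_simps)
qed

lemma set_attr_law:
  assumes "A \<in> set_pmf (attr_law mu n L)"
  shows "A x \<in> {0,1}"
proof -
  have "A \<in> PiE_dflt ({1..n} \<times> {1..L}) 0 (set_pmf \<circ> (\<lambda>_. attr_pmf mu))"
    using assms unfolding attr_law_def by (simp add: set_Pi_pmf)
  thus ?thesis using set_attr_pmf[of mu] by (cases x) (auto simp: PiE_dflt_def split: if_splits)
qed

lemma expect_attr_law:
  assumes "0 \<le> mu 1" "mu 1 \<le> 1" "mu 0 + mu 1 = 1"
    and nn: "\<And>x y. y \<in> {0,1} \<Longrightarrow> 0 \<le> F x y"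
  shows "measure_pmf.expectation (attr_law mu n L) (\<lambda>A. \<Prod>x\<in>{1..n}\<times>{1..L}. F x (A x)) =
         (\<Prod>x\<in>{1..n}\<times>{1..L}. mu 0 * F x 0 + mu 1 * F x 1)"
  unfolding attr_law_def
  by (subst expectation_prod_Pi_pmf)
     (use set_attr_pmf[of mu] in \<open>auto simp: nn integrable_measure_pmf_finite expect_attr[OF assms(1-3)]
       intro!: integrable_measure_pmf_finite finite_subset[OF set_attr_pmf]\<close>)

lemma prod_rows2:
  fixes n L :: nat
  assumes "u \<in> {1..n}" "v \<in> {1..n}" "u \<noteq> v"
    and one: "\<And>w l. w \<noteq> u \<Longrightarrow> w \<noteq> v \<Longrightarrow> \<Phi> (w, l) = (1::real)"
  shows "(\<Prod>x\<in>{1..n}\<times>{1..L}. \<Phi> x) = (\<Prod>l\<in>{1..L}. \<Phi> (u,l)) * (\<Prod>l\<in>{1..L}. \<Phi> (v,l))"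
proof -
  have "(\<Prod>x\<in>{1..n}\<times>{1..L}. \<Phi> x) = (\<Prod>w\<in>{1..n}. \<Prod>l\<in>{1..L}. \<Phi> (w,l))"
    by (simp add: prod.cartesian_product)
  also have "\<dots> = (\<Prod>w\<in>{u,v}. \<Prod>l\<in>{1..L}. \<Phi> (w,l))"
    using assms by (intro prod.mono_neutral_right) auto
  also have "\<dots> = (\<Prod>l\<in>{1..L}. \<Phi> (u,l)) * (\<Prod>l\<in>{1..L}. \<Phi> (v,l))"
    using assms by simp
  finally show ?thesis .
qed

lemma prod_rows1:
  fixes n L :: nat
  assumes "u \<in> {1..n}"
    and one: "\<And>w l. w \<noteq> u \<Longrightarrow> \<Phi> (w, l) = (1::real)"
  shows "(\<Prod>x\<in>{1..n}\<times>{1..L}. \<Phi> x) = (\<Prod>l\<in>{1..L}. \<Phi> (u,l))"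
proof -
  have "(\<Prod>x\<in>{1..n}\<times>{1..L}. \<Phi> x) = (\<Prod>w\<in>{1..n}. \<Prod>l\<in>{1..L}. \<Phi> (w,l))"
    by (simp add: prod.cartesian_product)
  also have "\<dots> = (\<Prod>w\<in>{u}. \<Prod>l\<in>{1..L}. \<Phi> (w,l))"
    using assms by (intro prod.mono_neutral_right) auto
  finally show ?thesis by simp
qed

definition bB :: "nat set \<Rightarrow> nat \<Rightarrow> nat" where "bB B l = (if l \<in> B then 1 else 0)"

definition eB :: "nat set \<Rightarrow> nat \<Rightarrow> nat \<Rightarrow> real" where "eB B l y = (if y = bB B l then 1 else 0)"

lemma row_expect2:
  assumes mu: "0 \<le> mu 1" "mu 1 \<le> 1" "mu 0 + mu 1 = 1"
    and uv: "u \<in> {1..n}" "v \<in> {1..n}" "u \<noteq> v"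
    and g: "\<And>l y. y \<in> {0,1} \<Longrightarrow> 0 \<le> g l y"
  shows "measure_pmf.expectation (attr_law mu n L)
           (\<lambda>A. (\<Prod>l\<in>{1..L}. eB B l (A (u,l))) * (\<Prod>l\<in>{1..L}. g l (A (v,l)))) =
         (\<Prod>l\<in>{1..L}. mu (bB B l)) * (\<Prod>l\<in>{1..L}. mu 0 * g l 0 + mu 1 * g l 1)"
proof -
  define F where "F = (\<lambda>(w,l). if w = u then eB B l else if w = v then g l else (\<lambda>_. 1::real))"
  have F1: "(\<Prod>x\<in>{1..n}\<times>{1..L}. F x (A x)) =
      (\<Prod>l\<in>{1..L}. eB B l (A (u,l))) * (\<Prod>l\<in>{1..L}. g l (A (v,l)))" for A
    using uv by (subst prod_rows2[OF uv]) (auto simp: F_def)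
  have F2: "(\<Prod>x\<in>{1..n}\<times>{1..L}. mu 0 * F x 0 + mu 1 * F x 1) =
      (\<Prod>l\<in>{1..L}. mu 0 * eB B l 0 + mu 1 * eB B l 1) * (\<Prod>l\<in>{1..L}. mu 0 * g l 0 + mu 1 * g l 1)"
    using uv mu by (subst prod_rows2[OF uv]) (auto simp: F_def)
  have F3: "mu 0 * eB B l 0 + mu 1 * eB B l 1 = mu (bB B l)" for l
    by (auto simp: eB_def bB_def)
  have "measure_pmf.expectation (attr_law mu n L) (\<lambda>A. \<Prod>x\<in>{1..n}\<times>{1..L}. F x (A x)) =
        (\<Prod>x\<in>{1..n}\<times>{1..L}. mu 0 * F x 0 + mu 1 * F x 1)"
    by (rule expect_attr_law[OF mu]) (auto simp: F_def eB_def g)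
  thus ?thesis unfolding F1 F2 F3 .
qed

lemma row_expect1:
  assumes mu: "0 \<le> mu 1" "mu 1 \<le> 1" "mu 0 + mu 1 = 1"
    and uv: "u \<in> {1..n}"
  shows "measure_pmf.expectation (attr_law mu n L)
           (\<lambda>A. (\<Prod>l\<in>{1..L}. eB B l (A (u,l)))) = (\<Prod>l\<in>{1..L}. mu (bB B l))"
proof -
  define F where "F = (\<lambda>(w,l). if w = u then eB B l else (\<lambda>_. 1::real))"
  have F1: "(\<Prod>x\<in>{1..n}\<times>{1..L}. F x (A x)) = (\<Prod>l\<in>{1..L}. eB B l (A (u,l)))" for A
    using uv by (subst prod_rows1[OF uv]) (auto simp: F_def)
  have F2: "(\<Prod>x\<in>{1..n}\<times>{1..L}. mu 0 * F x 0 + mu 1 * F x 1) =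
      (\<Prod>l\<in>{1..L}. mu 0 * eB B l 0 + mu 1 * eB B l 1)"
    using uv mu by (subst prod_rows1[OF uv]) (auto simp: F_def)
  have F3: "mu 0 * eB B l 0 + mu 1 * eB B l 1 = mu (bB B l)" for l
    by (auto simp: eB_def bB_def)
  have "measure_pmf.expectation (attr_law mu n L) (\<lambda>A. \<Prod>x\<in>{1..n}\<times>{1..L}. F x (A x)) =
        (\<Prod>x\<in>{1..n}\<times>{1..L}. mu 0 * F x 0 + mu 1 * F x 1)"
    by (rule expect_attr_law[OF mu]) (auto simp: F_def eB_def)
  thus ?thesis unfolding F1 F2 F3 .
qed

lemma prod_bB:
  assumes "B \<subseteq> {1..L}"
  shows "(\<Prod>l\<in>{1..L}. f (bB B l)) = f 1 ^ card B * f 0 ^ (L - card B)"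
proof -
  have "(\<Prod>l\<in>{1..L}. f (bB B l)) = (\<Prod>l\<in>{1..L}. if l \<in> B then f 1 else f 0)"
    by (auto simp: bB_def intro!: prod.cong)
  also have "\<dots> = f 1 ^ card ({1..L} \<inter> B) * f 0 ^ card ({1..L} - B)"
    by (subst prod.If_cases) (auto simp: Diff_eq)
  also have "card ({1..L} \<inter> B) = card B" using assms by (simp add: Int_absorb1)
  also have "card ({1..L} - B) = L - card B" using assms by (simp add: card_Diff_subset finite_subset)
  finally show ?thesis .
qed

lemma prod_eB:
  assumes A: "\<forall>l\<in>{1..L}. A (u,l) \<in> {0,1::nat}" and B: "B \<subseteq> {1..L}"
  shows "(\<Prod>l\<in>{1..L}. eB B l (A (u,l))) = (if B = {l\<in>{1..L}. A (u,l) = 1} then 1 else 0)"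
proof (cases "B = {l\<in>{1..L}. A (u,l) = 1}")
  case True
  have "eB B l (A (u,l)) = 1" if "l \<in> {1..L}" for l
    using A that True by (auto simp: eB_def bB_def)
  thus ?thesis using True by simp
next
  case False
  have "\<exists>l\<in>{1..L}. (l \<in> B) \<noteq> (A (u,l) = 1)"
  proof (rule ccontr)
    assume "\<not> ?thesis"
    hence "B = {l\<in>{1..L}. A (u,l) = 1}" using B by blast
    thus False using False by simp
  qed
  then obtain l where l: "l \<in> {1..L}" "(l \<in> B) \<noteq> (A (u,l) = 1)" by blast
  have "eB B l (A (u,l)) = 0" using l A by (auto simp: eB_def bB_def)
  hence "(\<Prod>l\<in>{1..L}. eB B l (A (u,l))) = 0" using l by (intro prod_zero) auto
  thus ?thesis using False by simp
qed

lemma S_decomp: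
  assumes A: "\<forall>l\<in>{1..L}. A (u,l) \<in> {0,1::nat}"
  shows "(if SL L A u = k then 1 else 0::real) =
         (\<Sum>B\<in>{B. B \<subseteq> {1..L} \<and> card B = k}. \<Prod>l\<in>{1..L}. eB B l (A (u,l)))"
proof -
  define B0 where "B0 = {l\<in>{1..L}. A (u,l) = 1}"
  have fin: "finite {B. B \<subseteq> {1..L} \<and> card B = k}" by simp
  have "(\<Sum>B\<in>{B. B \<subseteq> {1..L} \<and> card B = k}. \<Prod>l\<in>{1..L}. eB B l (A (u,l))) =
        (\<Sum>B\<in>{B. B \<subseteq> {1..L} \<and> card B = k}. if B = B0 then 1 else 0)"
  proof (intro sum.cong refl)
    fix B assume "B \<in> {B. B \<subseteq> {1..L} \<and> card B = k}"
    thus "(\<Prod>l\<in>{1..L}. eB B l (A (u,l))) = (if B = B0 then 1 else 0)"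
      using prod_eB[OF A, of B] by (simp add: B0_def)
  qed
  also have "\<dots> = (if B0 \<in> {B. B \<subseteq> {1..L} \<and> card B = k} then 1 else 0)"
    using fin by (simp add: sum.delta')
  also have "SL L A u = card B0"
  proof -
    have "SL L A u = (\<Sum>l\<in>{1..L}. if l \<in> B0 then 1 else 0)"
      unfolding SL_def B0_def using A by (intro sum.cong) auto
    also have "\<dots> = card ({1..L} \<inter> B0)" by (simp add: sum.If_cases)
    also have "{1..L} \<inter> B0 = B0" by (auto simp: B0_def)
    finally show ?thesis .
  qed
  moreover have "B0 \<subseteq> {1..L}" by (auto simp: B0_def)
  ultimately show ?thesis by simp
qed

lemma QL_eB:
  assumes A: "\<forall>l\<in>{1..L}. A (u,l) \<in> {0,1::nat}" and B: "B \<subseteq> {1..L}"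
  shows "(\<Prod>l\<in>{1..L}. eB B l (A (u,l))) * QL q L A u v =
         (\<Prod>l\<in>{1..L}. eB B l (A (u,l))) * (\<Prod>l\<in>{1..L}. q (bB B l) (A (v,l)))"
proof (cases "B = {l\<in>{1..L}. A (u,l) = 1}")
  case True
  have "A (u,l) = bB B l" if "l \<in> {1..L}" for l using A that True by (auto simp: bB_def)
  hence "QL q L A u v = (\<Prod>l\<in>{1..L}. q (bB B l) (A (v,l)))"
    unfolding QL_def by (intro prod.cong) auto
  thus ?thesis by simp
next
  case False
  thus ?thesis using prod_eB[OF A B] by simp
qed

lemma E_S:
  assumes mu: "0 \<le> mu 1" "mu 1 \<le> 1" "mu 0 + mu 1 = 1" and u: "u \<in> {1..n}"
  shows "measure_pmf.expectation (attr_law mu n L) (\<lambda>A. if SL L A u = k then 1 else 0) =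
         real (L choose k) * (mu 1 ^ k * mu 0 ^ (L - k))"
proof -
  let ?F = "{B. B \<subseteq> {1..L} \<and> card B = k}"
  have "measure_pmf.expectation (attr_law mu n L) (\<lambda>A. if SL L A u = k then 1 else 0) =
        measure_pmf.expectation (attr_law mu n L) (\<lambda>A. \<Sum>B\<in>?F. \<Prod>l\<in>{1..L}. eB B l (A (u,l)))"
  proof (intro integral_cong_AE AE_pmfI)
    fix A assume A: "A \<in> set_pmf (attr_law mu n L)"
    hence A': "\<forall>l\<in>{1..L}. A (u,l) \<in> {0,1::nat}" using set_attr_law by blast
    show "(if SL L A u = k then 1 else 0) = (\<Sum>B\<in>?F. \<Prod>l\<in>{1..L}. eB B l (A (u,l)))"
      by (rule S_decomp[OF A'])
  qed auto
  also have "\<dots> = (\<Sum>B\<in>?F. measure_pmf.expectation (attr_law mu n L) (\<lambda>A. \<Prod>l\<in>{1..L}. eB B l (A (u,l))))"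
    by (intro Bochner_Integration.integral_sum measure_pmf.integrable_const_bound[where B=1])
       (auto simp: eB_def abs_prod intro!: prod_le_1)
  also have "\<dots> = (\<Sum>B\<in>?F. mu 1 ^ k * mu 0 ^ (L - k))"
  proof (intro sum.cong refl)
    fix B assume "B \<in> ?F"
    thus "measure_pmf.expectation (attr_law mu n L) (\<lambda>A. \<Prod>l\<in>{1..L}. eB B l (A (u,l))) = mu 1 ^ k * mu 0 ^ (L - k)"
      using prod_bB[of B L mu] by (subst row_expect1[OF mu u]) auto
  qed
  also have "\<dots> = real (L choose k) * (mu 1 ^ k * mu 0 ^ (L - k))"
    by (simp add: n_subsets)
  finally show ?thesis .
qed

lemma E_SQ:
  assumes mu: "0 \<le> mu 1" "mu 1 \<le> 1" "mu 0 + mu 1 = 1"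
    and uv: "u \<in> {1..n}" "v \<in> {1..n}" "u \<noteq> v"
    and q: "\<And>a b. a \<in> {0,1} \<Longrightarrow> b \<in> {0,1} \<Longrightarrow> 0 \<le> q a b \<and> q a b \<le> 1"
  shows "measure_pmf.expectation (attr_law mu n L) (\<lambda>A. (if SL L A u = k then 1 else 0) * QL q L A u v) =
         real (L choose k) * (mu 1 ^ k * mu 0 ^ (L - k)) * (Gam mu q 1 ^ k * Gam mu q 0 ^ (L - k))"
proof -
  let ?F = "{B. B \<subseteq> {1..L} \<and> card B = k}"
  let ?P = "attr_law mu n L"
  have bB01: "bB B l \<in> {0,1}" for B l by (simp add: bB_def)
  have "measure_pmf.expectation ?P (\<lambda>A. (if SL L A u = k then 1 else 0) * QL q L A u v) =
        measure_pmf.expectation ?P (\<lambda>A. \<Sum>B\<in>?F. (\<Prod>l\<in>{1..L}. eB B l (A (u,l))) *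
           (\<Prod>l\<in>{1..L}. q (bB B l) (A (v,l))))"
  proof (intro integral_cong_AE AE_pmfI)
    fix A assume A: "A \<in> set_pmf ?P"
    hence A': "\<forall>l\<in>{1..L}. A (u,l) \<in> {0,1::nat}" using set_attr_law by blast
    show "(if SL L A u = k then 1 else 0) * QL q L A u v = (\<Sum>B\<in>?F. (\<Prod>l\<in>{1..L}. eB B l (A (u,l))) *
           (\<Prod>l\<in>{1..L}. q (bB B l) (A (v,l))))"
      unfolding S_decomp[OF A'] sum_distrib_right
    proof (intro sum.cong refl)
      fix B assume "B \<in> ?F"
      thus "(\<Prod>l\<in>{1..L}. eB B l (A (u,l))) * QL q L A u v = (\<Prod>l\<in>{1..L}. eB B l (A (u,l))) *
           (\<Prod>l\<in>{1..L}. q (bB B l) (A (v,l)))" using QL_eB[OF A', of B] by simp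
    qed
  qed auto
  also have "\<dots> = (\<Sum>B\<in>?F. measure_pmf.expectation ?P (\<lambda>A. (\<Prod>l\<in>{1..L}. eB B l (A (u,l))) *
           (\<Prod>l\<in>{1..L}. q (bB B l) (A (v,l)))))"
  proof (intro Bochner_Integration.integral_sum measure_pmf.integrable_const_bound[where B=1])
    fix B
    show "AE A in ?P. norm ((\<Prod>l\<in>{1..L}. eB B l (A (u,l))) * (\<Prod>l\<in>{1..L}. q (bB B l) (A (v,l)))) \<le> 1"
    proof (intro AE_pmfI)
      fix A assume A: "A \<in> set_pmf ?P"
      have "\<bar>(\<Prod>l\<in>{1..L}. eB B l (A (u,l)))\<bar> \<le> 1"
        by (simp add: abs_prod eB_def prod_le_1)
      moreover have "\<bar>\<Prod>l\<in>{1..L}. q (bB B l) (A (v,l))\<bar> \<le> 1"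
        unfolding abs_prod using q bB01 set_attr_law[OF A] by (intro prod_le_1) auto
      ultimately show "norm ((\<Prod>l\<in>{1..L}. eB B l (A (u,l))) * (\<Prod>l\<in>{1..L}. q (bB B l) (A (v,l)))) \<le> 1"
        by (simp add: abs_mult mult_le_one)
    qed
  qed auto
  also have "\<dots> = (\<Sum>B\<in>?F. (mu 1 ^ k * mu 0 ^ (L - k)) * (Gam mu q 1 ^ k * Gam mu q 0 ^ (L - k)))"
  proof (intro sum.cong refl)
    fix B assume B: "B \<in> ?F"
    have "(\<Prod>l\<in>{1..L}. mu 0 * q (bB B l) 0 + mu 1 * q (bB B l) 1) = (\<Prod>l\<in>{1..L}. Gam mu q (bB B l))"
      by (simp add: Gam_def)
    thus "measure_pmf.expectation ?P (\<lambda>A. (\<Prod>l\<in>{1..L}. eB B l (A (u,l))) *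
           (\<Prod>l\<in>{1..L}. q (bB B l) (A (v,l)))) = (mu 1 ^ k * mu 0 ^ (L - k)) * (Gam mu q 1 ^ k * Gam mu q 0 ^ (L - k))"
      using B q bB01 prod_bB[of B L mu] prod_bB[of B L "Gam mu q"]
      by (subst row_expect2[OF mu uv]) auto
  qed
  also have "\<dots> = real (L choose k) * (mu 1 ^ k * mu 0 ^ (L - k)) * (Gam mu q 1 ^ k * Gam mu q 0 ^ (L - k))"
    by (simp add: n_subsets)
  finally show ?thesis .
qed

lemma pair_sf: "pair_sigma_finite (measure_pmf (attr_law mu n L)) (unif_law n)"
  unfolding pair_sigma_finite_def
  using prob_space_imp_sigma_finite[OF unif_prob] prob_space_imp_sigma_finite[OF prob_space_measure_pmf]
  by auto

lemma mag_prob: "prob_space (mag_space mu n L)"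
  unfolding mag_space_def
  by (intro prob_space_pair prob_space_measure_pmf unif_prob)

lemma space_unif_coord_meas:
  assumes "1 \<le> i" "i < j" "j \<le> n"
  shows "(\<lambda>y. y (i,j)) \<in> borel_measurable (unif_law n)"
proof -
  have "(\<lambda>y. y (i,j)) \<in> measurable (unif_law n) (uniform_measure lborel {0<..<1::real})"
    unfolding unif_law_def using assms by (intro measurable_component_singleton) auto
  thus ?thesis using measurable_cong_sets[OF refl, of "uniform_measure lborel {0<..<1::real}" borel "unif_law n"]
    by simp
qed

lemma meas_fst_mag: "(\<lambda>\<omega>. g (fst \<omega>)) \<in> measurable (mag_space mu n L) N \<longleftrightarrow> g \<in> UNIV \<rightarrow> space N"
proof
  assume "g \<in> UNIV \<rightarrow> space N"
  hence "g \<in> measurable (measure_pmf (attr_law mu n L)) N" by simp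
  thus "(\<lambda>\<omega>. g (fst \<omega>)) \<in> measurable (mag_space mu n L) N"
    unfolding mag_space_def by (rule measurable_compose[OF measurable_fst])
next
  assume "(\<lambda>\<omega>. g (fst \<omega>)) \<in> measurable (mag_space mu n L) N"
  note m = measurable_space[OF this]
  have "space (unif_law n) \<noteq> {}"
    using prob_space.not_empty[OF unif_prob] .
  then obtain y where y: "y \<in> space (unif_law n)" by blast
  show "g \<in> UNIV \<rightarrow> space N"
  proof
    fix x :: "nat \<times> nat \<Rightarrow> nat"
    have "(x, y) \<in> space (mag_space mu n L)" using y unfolding mag_space_def by (simp add: space_pair_measure)
    from m[OF this] show "g x \<in> space N" by simp
  qed
qed

lemma meas_snd_mag:
  assumes "1 \<le> i" "i < j" "j \<le> n"
  shows "(\<lambda>\<omega>. snd \<omega> (i,j)) \<in> borel_measurable (mag_space mu n L)"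
  unfolding mag_space_def
  by (rule measurable_compose[OF measurable_snd space_unif_coord_meas[OF assms]])

lemma int_fst:
  fixes g :: "_ \<Rightarrow> real" and C :: real
  assumes g: "\<And>x. \<bar>g x\<bar> \<le> C"
  shows "integral\<^sup>L (mag_space mu n L) (\<lambda>\<omega>. g (fst \<omega>)) = measure_pmf.expectation (attr_law mu n L) g"
proof -
  interpret pair_sigma_finite "measure_pmf (attr_law mu n L)" "unif_law n" by (rule pair_sf)
  interpret P: prob_space "mag_space mu n L" by (rule mag_prob)
  interpret U: prob_space "unif_law n" by (rule unif_prob)
  have int: "integrable (mag_space mu n L) (\<lambda>\<omega>. g (fst \<omega>))"
    by (intro P.integrable_const_bound[where B=C]) (auto simp: g meas_fst_mag)
  have "integral\<^sup>L (mag_space mu n L) (\<lambda>\<omega>. g (fst \<omega>)) =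
        (\<integral>x. (\<integral>y. g x \<partial>unif_law n) \<partial>measure_pmf (attr_law mu n L))"
    using integral_fst'[OF int[unfolded mag_space_def]] unfolding mag_space_def by simp
  also have "\<dots> = measure_pmf.expectation (attr_law mu n L) g"
    by (simp add: U.prob_space)
  finally show ?thesis .
qed

lemma int_edge:
  fixes g h :: "_ \<Rightarrow> real" and C :: real
  assumes g: "\<And>x. \<bar>g x\<bar> \<le> C" and ij: "1 \<le> i" "i < j" "j \<le> n"
    and h: "\<And>x. x \<in> set_pmf (attr_law mu n L) \<Longrightarrow> 0 \<le> h x \<and> h x \<le> 1"
  shows "integral\<^sup>L (mag_space mu n L) (\<lambda>\<omega>. g (fst \<omega>) * (if snd \<omega> (i,j) \<le> h (fst \<omega>) then 1 else 0)) =
         measure_pmf.expectation (attr_law mu n L) (\<lambda>x. g x * h x)"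
proof -
  interpret pair_sigma_finite "measure_pmf (attr_law mu n L)" "unif_law n" by (rule pair_sf)
  interpret P: prob_space "mag_space mu n L" by (rule mag_prob)
  interpret U: prob_space "unif_law n" by (rule unif_prob)
  note [measurable] = meas_snd_mag[OF ij] space_unif_coord_meas[OF ij]
  have [measurable]: "(\<lambda>\<omega>. h (fst \<omega>)) \<in> borel_measurable (mag_space mu n L)"
    "(\<lambda>\<omega>. g (fst \<omega>)) \<in> borel_measurable (mag_space mu n L)"
    by (auto simp: meas_fst_mag)
  have int: "integrable (mag_space mu n L) (\<lambda>\<omega>. g (fst \<omega>) * (if snd \<omega> (i,j) \<le> h (fst \<omega>) then 1 else 0))"
  proof (intro P.integrable_const_bound[where B=C])
    show "AE x in mag_space mu n L. norm (g (fst x) * (if snd x (i, j) \<le> h (fst x) then 1 else 0)) \<le> C"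
      using g by (auto simp: abs_mult intro: order.trans[OF _ g] intro!: AE_I2)
  qed measurable
  have "integral\<^sup>L (mag_space mu n L) (\<lambda>\<omega>. g (fst \<omega>) * (if snd \<omega> (i,j) \<le> h (fst \<omega>) then 1 else 0)) =
        (\<integral>x. (\<integral>y. g x * (if y (i,j) \<le> h x then 1 else 0) \<partial>unif_law n) \<partial>measure_pmf (attr_law mu n L))"
    using integral_fst'[OF int[unfolded mag_space_def]] unfolding mag_space_def by simp
  also have "\<dots> = measure_pmf.expectation (attr_law mu n L) (\<lambda>x. g x * h x)"
  proof (intro integral_cong_AE AE_pmfI)
    fix x assume x: "x \<in> set_pmf (attr_law mu n L)"
    have "(\<integral>y. g x * (if y (i,j) \<le> h x then 1 else 0) \<partial>unif_law n) =
          (\<integral>y. g x * indicator {y\<in>space (unif_law n). y (i,j) \<le> h x} y \<partial>unif_law n)"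
      by (intro Bochner_Integration.integral_cong) (auto simp: indicator_def)
    also have "\<dots> = g x * (\<integral>y. indicator {y\<in>space (unif_law n). y (i,j) \<le> h x} y \<partial>unif_law n)"
      by (rule integral_mult_right_zero)
    also have "\<dots> = g x * measure (unif_law n) {y\<in>space (unif_law n). y (i,j) \<le> h x}"
      by (simp add: Int_absorb2)
    also have "\<dots> = g x * h x" using unif_coord[OF ij, of "h x"] h[OF x] by simp
    finally show "(\<integral>y. g x * (if y (i,j) \<le> h x then 1 else 0) \<partial>unif_law n) = g x * h x" .
  qed auto
  finally show ?thesis .
qed

lemma QL_range:
  assumes A: "A \<in> set_pmf (attr_law mu n L)"
    and q: "\<And>a b. a \<in> {0,1} \<Longrightarrow> b \<in> {0,1} \<Longrightarrow> 0 \<le> q a b \<and> q a b \<le> 1"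
  shows "0 \<le> QL q L A u v \<and> QL q L A u v \<le> 1"
  unfolding QL_def using q set_attr_law[OF A]
  by (auto intro!: prod_nonneg prod_le_1)

lemma card_as_sum:
  "real (card {u\<in>{1..n::nat}. P u}) = (\<Sum>u\<in>{1..n}. if P u then 1 else 0)"
proof -
  have "(\<Sum>u\<in>{1..n}. if P u then 1 else 0 :: real) = real (card ({1..n} \<inter> {u. P u}))"
    by (simp add: sum.If_cases)
  also have "{1..n} \<inter> {u. P u} = {u\<in>{1..n}. P u}" by auto
  finally show ?thesis by simp
qed

lemma pointwise_bound:
  fixes s :: real
  assumes u: "u \<in> {1..n::nat}" and s: "s = (if S then 1 else 0)" and nE: "\<not> E u"
  shows "(if (\<forall>v\<in>{1..n}. \<not> E v) \<and> S then 1 else 0) \<ge>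
         s - (\<Sum>v\<in>{1..n}-{u}. s * (if E v \<and> v \<noteq> u then 1 else 0))"
proof (cases S)
  case False thus ?thesis using s by simp
next
  case True
  show ?thesis
  proof (cases "\<forall>v\<in>{1..n}. \<not> E v")
    case True
    thus ?thesis using \<open>S\<close> s by (simp add: sum_nonneg)
  next
    case False
    then obtain v where v: "v \<in> {1..n}" "E v" by blast
    show ?thesis
    proof (cases "v = u")
      case True
      thus ?thesis using v nE by simp
    next
      case vu: False
      have "s * (if E v \<and> v \<noteq> u then 1 else 0) \<le> (\<Sum>v\<in>{1..n}-{u}. s * (if E v \<and> v \<noteq> u then 1 else 0))"
        by (rule member_le_sum) (use v vu s in auto)
      hence "1 \<le> (\<Sum>v\<in>{1..n}-{u}. s * (if E v \<and> v \<noteq> u then 1 else 0))"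
        using v vu s \<open>S\<close> by simp
      thus ?thesis using s \<open>S\<close> False by simp
    qed
  qed
qed

lemma expected_lower:
  assumes mu: "0 \<le> mu 1" "mu 1 \<le> 1" "mu 0 + mu 1 = 1"
    and q: "\<And>a b. a \<in> {0,1} \<Longrightarrow> b \<in> {0,1} \<Longrightarrow> 0 \<le> q a b \<and> q a b \<le> 1"
  shows "expected_isolated mu q n L k \<ge>
     real n * (real (L choose k) * (mu 1 ^ k * mu 0 ^ (L - k)) -
       real (n - 1) * (real (L choose k) * (mu 1 ^ k * mu 0 ^ (L - k)) * (Gam mu q 1 ^ k * Gam mu q 0 ^ (L - k))))"
proof -
  define w where "w = real (L choose k) * (mu 1 ^ k * mu 0 ^ (L - k))"
  define H where "H = Gam mu q 1 ^ k * Gam mu q 0 ^ (L - k)"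
  let ?M = "mag_space mu n L"
  interpret P: prob_space ?M by (rule mag_prob)
  define iso where "iso u \<omega> \<longleftrightarrow> (\<forall>v\<in>{1..n}. \<not> mag_edge q L (fst \<omega>) (snd \<omega>) u v) \<and> SL L (fst \<omega>) u = k"
    for u \<omega>
  define s where "s u A = (if SL L A u = k then 1 else (0::real))" for u A
  define e where "e u v \<omega> = (if snd \<omega> (min u v, max u v) \<le> QL q L (fst \<omega>) u v then 1 else (0::real))" for u v \<omega>
  have edge_meas: "Measurable.pred ?M (\<lambda>\<omega>. mag_edge q L (fst \<omega>) (snd \<omega>) u v)"
    if "u \<in> {1..n}" "v \<in> {1..n}" for u v
  proof (cases "u = v")
    case True thus ?thesis by (simp add: mag_edge_def)
  next
    case False
    have ij: "1 \<le> min u v" "min u v < max u v" "max u v \<le> n" using that False by auto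
    note [measurable] = meas_snd_mag[OF ij]
    have [measurable]: "(\<lambda>\<omega>. QL q L (fst \<omega>) u v) \<in> borel_measurable ?M"
      by (simp add: meas_fst_mag[where g="\<lambda>A. QL q L A u v"])
    show ?thesis unfolding mag_edge_def using False by measurable
  qed
  have iso_meas: "(\<lambda>\<omega>. if iso u \<omega> then 1 else 0::real) \<in> borel_measurable ?M" if u: "u \<in> {1..n}" for u
  proof -
    have [measurable]: "Measurable.pred ?M (\<lambda>\<omega>. SL L (fst \<omega>) u = k)"
      by (simp add: meas_fst_mag[where g="\<lambda>A. SL L A u = k"])
    have [measurable]: "Measurable.pred ?M (\<lambda>\<omega>. \<forall>v\<in>{1..n}. \<not> mag_edge q L (fst \<omega>) (snd \<omega>) u v)"
      using edge_meas[OF u] by measurable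
    show ?thesis unfolding iso_def by measurable
  qed
  have s_int: "integrable ?M (\<lambda>\<omega>. s u (fst \<omega>))" for u
    by (intro P.integrable_const_bound[where B=1])
       (auto simp: meas_fst_mag[where g="s u"] simp del: s_def, auto simp: s_def)
  have e_int: "integrable ?M (\<lambda>\<omega>. s u (fst \<omega>) * e u v \<omega>)" if "u \<in> {1..n}" "v \<in> {1..n}" "u \<noteq> v" for u v
  proof -
    have ij: "1 \<le> min u v" "min u v < max u v" "max u v \<le> n" using that by auto
    note [measurable] = meas_snd_mag[OF ij]
    have [measurable]: "(\<lambda>\<omega>. QL q L (fst \<omega>) u v) \<in> borel_measurable ?M"
       "(\<lambda>\<omega>. s u (fst \<omega>)) \<in> borel_measurable ?M"
      by (simp_all add: meas_fst_mag[where g="\<lambda>A. QL q L A u v"] meas_fst_mag[where g="s u"])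
    show ?thesis
      apply (intro P.integrable_const_bound[where B=1])
       apply (auto simp: s_def e_def)[1]
      unfolding e_def by measurable
  qed
  have iso_int: "integrable ?M (\<lambda>\<omega>. if iso u \<omega> then 1 else 0::real)" if "u \<in> {1..n}" for u
    by (intro P.integrable_const_bound[where B=1]) (auto simp: iso_meas[OF that])
  have per_u: "integral\<^sup>L ?M (\<lambda>\<omega>. if iso u \<omega> then 1 else 0::real) \<ge> w - real (n - 1) * (w * H)"
    if u: "u \<in> {1..n}" for u
  proof -
    have ints: "\<forall>v\<in>{1..n}-{u}. integrable ?M (\<lambda>\<omega>. s u (fst \<omega>) * e u v \<omega>)"
      using e_int u by auto
    have "integral\<^sup>L ?M (\<lambda>\<omega>. if iso u \<omega> then 1 else 0::real) \<ge>
          integral\<^sup>L ?M (\<lambda>\<omega>. s u (fst \<omega>) - (\<Sum>v\<in>{1..n}-{u}. s u (fst \<omega>) * e u v \<omega>))"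
    proof (rule integral_mono)
      show "integrable ?M (\<lambda>\<omega>. s u (fst \<omega>) - (\<Sum>v\<in>{1..n}-{u}. s u (fst \<omega>) * e u v \<omega>))"
        using s_int e_int u by (intro Bochner_Integration.integrable_diff Bochner_Integration.integrable_sum) auto
      show "integrable ?M (\<lambda>\<omega>. if iso u \<omega> then 1 else 0::real)" by (rule iso_int[OF u])
      fix \<omega>
      have "(\<Sum>v\<in>{1..n}-{u}. s u (fst \<omega>) * e u v \<omega>) =
            (\<Sum>v\<in>{1..n}-{u}. s u (fst \<omega>) * (if mag_edge q L (fst \<omega>) (snd \<omega>) u v \<and> v \<noteq> u then 1 else 0))"
        by (intro sum.cong refl) (auto simp: e_def mag_edge_def)
      thus "s u (fst \<omega>) - (\<Sum>v\<in>{1..n}-{u}. s u (fst \<omega>) * e u v \<omega>) \<le> (if iso u \<omega> then 1 else 0)"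
        using pointwise_bound[OF u, of "s u (fst \<omega>)" "SL L (fst \<omega>) u = k" "\<lambda>v. mag_edge q L (fst \<omega>) (snd \<omega>) u v"]
        unfolding iso_def by (simp add: s_def mag_edge_def)
    qed
    also have "integral\<^sup>L ?M (\<lambda>\<omega>. s u (fst \<omega>) - (\<Sum>v\<in>{1..n}-{u}. s u (fst \<omega>) * e u v \<omega>)) =
       integral\<^sup>L ?M (\<lambda>\<omega>. s u (fst \<omega>)) - (\<Sum>v\<in>{1..n}-{u}. integral\<^sup>L ?M (\<lambda>\<omega>. s u (fst \<omega>) * e u v \<omega>))"
      using s_int ints
      by (subst Bochner_Integration.integral_diff) (auto intro!: Bochner_Integration.integral_sum Bochner_Integration.integrable_sum)
    also have "integral\<^sup>L ?M (\<lambda>\<omega>. s u (fst \<omega>)) = w"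
    proof -
      have "s u = (\<lambda>A. if SL L A u = k then 1 else 0)" by (simp add: s_def fun_eq_iff)
      thus ?thesis by (subst int_fst[where C=1]) (auto simp: s_def w_def E_S[OF mu u])
    qed
    also have "(\<Sum>v\<in>{1..n}-{u}. integral\<^sup>L ?M (\<lambda>\<omega>. s u (fst \<omega>) * e u v \<omega>)) = (\<Sum>v\<in>{1..n}-{u}. w * H)"
    proof (intro sum.cong refl)
      fix v assume v: "v \<in> {1..n} - {u}"
      have ij: "1 \<le> min u v" "min u v < max u v" "max u v \<le> n" using u v by auto
      have "integral\<^sup>L ?M (\<lambda>\<omega>. s u (fst \<omega>) * e u v \<omega>) =
            measure_pmf.expectation (attr_law mu n L) (\<lambda>A. s u A * QL q L A u v)"
        unfolding e_def
        by (rule int_edge[OF _ ij, where C=1]) (use QL_range[OF _ q] in \<open>auto simp: s_def\<close>)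
      also have "\<dots> = w * H" unfolding s_def w_def H_def
        using u v by (subst E_SQ[OF mu _ _ _ q]) auto
      finally show "integral\<^sup>L ?M (\<lambda>\<omega>. s u (fst \<omega>) * e u v \<omega>) = w * H" .
    qed
    also have "(\<Sum>v\<in>{1..n}-{u}. w * H) = real (n - 1) * (w * H)"
      using u by (simp add: card_Diff_singleton)
    finally show ?thesis .
  qed
  have "expected_isolated mu q n L k = integral\<^sup>L ?M (\<lambda>\<omega>. \<Sum>u\<in>{1..n}. if iso u \<omega> then 1 else 0)"
    unfolding expected_isolated_def isolated_count_def card_as_sum iso_def ..
  also have "\<dots> = (\<Sum>u\<in>{1..n}. integral\<^sup>L ?M (\<lambda>\<omega>. if iso u \<omega> then 1 else 0))"
    using iso_int by (intro Bochner_Integration.integral_sum) auto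
  also have "\<dots> \<ge> (\<Sum>u\<in>{1..n}. w - real (n - 1) * (w * H))"
    using per_u by (intro sum_mono) auto
  finally have "expected_isolated mu q n L k \<ge> real n * (w - real (n - 1) * (w * H))"
    by (cases n) simp_all
  thus ?thesis by (simp add: w_def H_def mult.assoc)
qed



lemma binom_step:
  fixes L k :: nat assumes "k < L"
  shows "real (L choose (Suc k)) * real (Suc k) = real (L choose k) * real (L - k)"
proof -
  have "Suc k * (L choose Suc k) = L * ((L - 1) choose k)" by (rule binomial_absorption)
  also have "\<dots> = (L - k) * (L choose k)" by (rule binomial_absorb_comp[symmetric])
  finally have "(L choose Suc k) * Suc k = (L choose k) * (L - k)" by (simp add: mult.commute)
  hence "real ((L choose Suc k) * Suc k) = real ((L choose k) * (L - k))" by simp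
  thus ?thesis by (simp only: of_nat_mult)
qed

lemma binom_mode:
  fixes L l :: nat
  assumes l: "0 < l" "l < L"
  shows "real (L choose l) * (real l / real L) ^ l * (1 - real l / real L) ^ (L - l) \<ge> 1 / (real L + 1)"
proof -
  define x where "x = real l / real L"
  have x: "0 < x" "x < 1" using l by (auto simp: x_def field_simps)
  define t where "t k = real (L choose k) * x ^ k * (1 - x) ^ (L - k)" for k
  have t_nn: "0 \<le> t k" for k using x by (simp add: t_def)
  have rel: "t (Suc k) * (real (Suc k) * (1 - x)) = t k * (real (L - k) * x)" if "k < L" for k
  proof -
    have e: "(1 - x) ^ (L - k) = (1 - x) ^ (L - Suc k) * (1 - x)"
      using that by (metis Suc_diff_Suc power_Suc2)
    have "t (Suc k) * (real (Suc k) * (1 - x)) =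
          (real (L choose (Suc k)) * real (Suc k)) * x ^ Suc k * ((1 - x) ^ (L - Suc k) * (1 - x))"
      by (simp add: t_def algebra_simps)
    also have "\<dots> = (real (L choose k) * real (L - k)) * x ^ Suc k * ((1 - x) ^ (L - Suc k) * (1 - x))"
      by (simp only: binom_step[OF that])
    also have "\<dots> = real (L choose k) * real (L - k) * x ^ Suc k * (1 - x) ^ (L - k)"
      by (simp only: e)
    also have "\<dots> = t k * (real (L - k) * x)" by (simp add: t_def algebra_simps)
    finally show ?thesis .
  qed
  have up: "t k \<le> t (Suc k)" if "k < l" for k
  proof -
    have kL: "k < L" using that l by simp
    have "real (Suc k) * (1 - x) \<le> real (L - k) * x"
    proof -
      have "real (L - k) = real L - real k" using kL by simp
      moreover have "real (Suc k) \<le> real l" using that by simp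
      moreover have "real l = x * real L" using l by (simp add: x_def)
      ultimately show ?thesis using x by (simp add: algebra_simps)
    qed
    hence "t k * (real (Suc k) * (1 - x)) \<le> t (Suc k) * (real (Suc k) * (1 - x))"
      using rel[OF kL] t_nn by (metis mult_left_mono)
    moreover have "0 < real (Suc k) * (1 - x)" using x by simp
    ultimately show ?thesis by (rule mult_right_le_imp_le)
  qed
  have down: "t (Suc k) \<le> t k" if "l \<le> k" "k < L" for k
  proof -
    have "real (L - k) * x \<le> real (Suc k) * (1 - x)"
    proof -
      have "real (L - k) = real L - real k" using that by simp
      moreover have "real l \<le> real k" using that by simp
      moreover have "real l = x * real L" using l by (simp add: x_def)
      moreover have "real L \<le> real (Suc k) + real k * 0 + real L" by simp
      ultimately show ?thesis using x that
        by (simp add: algebra_simps)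
    qed
    hence "t (Suc k) * (real (Suc k) * (1 - x)) \<le> t k * (real (Suc k) * (1 - x))"
      using rel[OF that(2)] t_nn by (metis mult_left_mono)
    moreover have "0 < real (Suc k) * (1 - x)" using x by simp
    ultimately show ?thesis by (rule mult_right_le_imp_le)
  qed
  have le: "t k \<le> t l" if "k \<le> L" for k
  proof (cases "k \<le> l")
    case True
    thus ?thesis
    proof (induction k rule: inc_induct)
      case (step n) thus ?case using up[of n] by simp
    qed simp
  next
    case False
    hence "l \<le> k" by simp
    thus ?thesis using that
    proof (induction k rule: dec_induct)
      case (step n) thus ?case using down[of n] by simp
    qed simp
  qed
  have "1 = (x + (1 - x)) ^ L" by simp
  also have "\<dots> = (\<Sum>k\<le>L. t k)" by (simp only: binomial_ring t_def)
  also have "\<dots> \<le> (\<Sum>k\<le>L. t l)" by (intro sum_mono le) auto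
  also have "\<dots> = (real L + 1) * t l" by simp
  finally have "1 \<le> (real L + 1) * t l" .
  hence "1 / (real L + 1) \<le> t l" by (simp add: field_simps)
  thus ?thesis by (simp add: t_def x_def)
qed

definition ent :: "real \<Rightarrow> real \<Rightarrow> real" where
  "ent m x = x * (ln m - ln x) + (1 - x) * (ln (1 - m) - ln (1 - x))"

lemma ln_G:
  assumes "0 < x" "x < 1" "0 < m" "m < 1"
  shows "ln (G x m) = ent m x"
  using assms unfolding G_def ent_def
  by (simp add: ln_mult ln_powr ln_div)

lemma pow_ent:
  fixes L l :: nat
  assumes l: "0 < l" "l < L" and m: "0 < m" "m < 1"
  shows "m ^ l * (1 - m) ^ (L - l) =
         (real l / real L) ^ l * (1 - real l / real L) ^ (L - l) * exp (real L * ent m (real l / real L))"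
proof -
  define x where "x = real l / real L"
  have x: "0 < x" "x < 1" using l by (auto simp: x_def field_simps)
  have Lx: "real L * x = real l" and Lx': "real L * (1 - x) = real (L - l)"
    using l by (auto simp: x_def field_simps of_nat_diff)
  have "ln (m ^ l * (1 - m) ^ (L - l)) = real l * ln m + real (L - l) * ln (1 - m)"
    using m by (simp add: ln_mult ln_realpow)
  also have "\<dots> = real l * ln x + real (L - l) * ln (1 - x) + real L * ent m x"
    unfolding ent_def
    by (simp add: algebra_simps Lx[symmetric] Lx'[symmetric])
  also have "\<dots> = ln (x ^ l * (1 - x) ^ (L - l) * exp (real L * ent m x))"
    using x by (simp add: ln_mult ln_realpow)
  finally have "ln (m ^ l * (1 - m) ^ (L - l)) = ln (x ^ l * (1 - x) ^ (L - l) * exp (real L * ent m x))" .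
  hence "m ^ l * (1 - m) ^ (L - l) = x ^ l * (1 - x) ^ (L - l) * exp (real L * ent m x)"
    using x m by (subst (asm) ln_inj_iff) auto
  thus ?thesis by (simp add: x_def)
qed

lemma ent_deriv:
  assumes "0 < x" "x < 1"
  shows "DERIV (ent m) x :> (ln m - ln x - ln (1 - m) + ln (1 - x))"
proof -
  have d1: "DERIV (\<lambda>z. z * (ln m - ln z)) x :> 1 * (ln m - ln x) + x * (0 - inverse x)"
    using DERIV_mult[OF DERIV_ident DERIV_diff[OF DERIV_const DERIV_ln[OF assms(1)]], of "ln m"] by (simp add: mult.commute)
  have d2': "DERIV (\<lambda>z. ln (1 - z)) x :> inverse (1 - x) * (0 - 1)"
    using DERIV_chain2[OF DERIV_ln DERIV_diff[OF DERIV_const DERIV_ident, of 1 x]] assms by simp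
  have d2: "DERIV (\<lambda>z. (1 - z) * (ln (1 - m) - ln (1 - z))) x :>
      (0 - 1) * (ln (1 - m) - ln (1 - x)) + (1 - x) * (0 - inverse (1 - x) * (0 - 1))"
    using DERIV_mult[OF DERIV_diff[OF DERIV_const DERIV_ident] DERIV_diff[OF DERIV_const d2'], of 1 "ln (1 - m)"]
    by (simp add: mult.commute)
  have D: "DERIV (ent m) x :> (1 * (ln m - ln x) + x * (0 - inverse x)) +
      ((0 - 1) * (ln (1 - m) - ln (1 - x)) + (1 - x) * (0 - inverse (1 - x) * (0 - 1)))"
    unfolding ent_def by (rule DERIV_add[OF d1 d2])
  have e1: "x * (0 - inverse x) = -1" and e2: "(1 - x) * (0 - inverse (1 - x) * (0 - 1)) = 1"
    using assms by (auto simp: field_simps)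
  show ?thesis
    by (rule DERIV_cong[OF D]) (simp only: e1 e2, simp)
qed

lemma ent_cont_on:
  assumes "0 < a" "b < 1"
  shows "continuous_on {a..b} (ent m)"
proof -
  have "\<forall>x\<in>{a..b}. isCont (ent m) x"
  proof
    fix x assume "x \<in> {a..b}"
    hence "0 < x" "x < 1" using assms by auto
    thus "isCont (ent m) x" using ent_deriv DERIV_isCont by blast
  qed
  thus ?thesis by (rule continuous_at_imp_continuous_on)
qed

lemma ent_mono:
  assumes "0 < a" "a < b" "b \<le> m" "m < 1"
  shows "ent m a < ent m b"
proof (rule DERIV_pos_imp_increasing_open[OF assms(2)])
  fix x assume x: "a < x" "x < b"
  hence x': "0 < x" "x < 1" "x < m" using assms by auto
  have "ln x < ln m" "ln (1 - m) < ln (1 - x)" using x' assms by auto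
  thus "\<exists>y. DERIV (ent m) x :> y \<and> 0 < y" using ent_deriv[OF x'(1,2), of m] by auto
next
  show "continuous_on {a..b} (ent m)" using assms by (intro ent_cont_on) auto
qed

lemma ent_at0:
  assumes "0 < m" "m < 1"
  shows "(ent m \<longlongrightarrow> ln (1 - m)) (at_right 0)"
proof -
  have xl: "((\<lambda>x::real. x * ln x) \<longlongrightarrow> 0) (at_right 0)" by real_asymp
  have x0: "((\<lambda>x::real. x) \<longlongrightarrow> 0) (at_right 0)" by (rule tendsto_ident_at)
  have l1: "((\<lambda>x::real. ln (1 - x)) \<longlongrightarrow> ln (1 - 0)) (at_right 0)"
    by (intro tendsto_intros x0) auto
  have "((\<lambda>x. x * ln m - x * ln x + (1 - x) * (ln (1 - m) - ln (1 - x))) \<longlongrightarrow>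
          0 * ln m - 0 + (1 - 0) * (ln (1 - m) - ln (1 - 0))) (at_right 0)"
    by (intro tendsto_intros x0 xl l1)
  moreover have "(\<lambda>x. x * ln m - x * ln x + (1 - x) * (ln (1 - m) - ln (1 - x))) = ent m"
    by (auto simp: ent_def fun_eq_iff algebra_simps)
  ultimately show ?thesis by simp
qed

lemma ent_m: "ent m m = 0" by (simp add: ent_def)

lemma nu_star_props:
  assumes m: "0 < mu 1" "mu 1 < 1" and rho: "0 < \<rho>" and c: "1 + \<rho> * ln (1 - mu 1) < 0"
  shows "nu_star mu \<rho> \<in> {0<..<mu 1} \<and> 1 + \<rho> * ent (mu 1) (nu_star mu \<rho>) = 0"
proof -
  define m where "m = mu 1"
  have m': "0 < m" "m < 1" using m by (auto simp: m_def)
  have eq: "(\<nu> \<in> {0<..<m} \<and> 1 + \<rho> * ln (G \<nu> m) = 0) \<longleftrightarrow> (\<nu> \<in> {0<..<m} \<and> 1 + \<rho> * ent m \<nu> = 0)" for \<nu>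
    using m' ln_G[of \<nu> m] by auto
  have "eventually (\<lambda>x. 1 + \<rho> * ent m x < 0) (at_right 0)"
  proof (rule order_tendstoD(2))
    show "((\<lambda>x. 1 + \<rho> * ent m x) \<longlongrightarrow> 1 + \<rho> * ln (1 - m)) (at_right 0)"
      by (intro tendsto_intros ent_at0 m')
  qed (use c in \<open>simp add: m_def\<close>)
  moreover have "eventually (\<lambda>x. x < m) (at_right (0::real))"
    using m' by (intro eventually_at_right_less order_tendstoD(2)[OF tendsto_ident_at]) auto
  moreover have "eventually (\<lambda>x. 0 < x) (at_right (0::real))" by (rule eventually_at_right_less)
  ultimately have "eventually (\<lambda>x. 1 + \<rho> * ent m x < 0 \<and> x < m \<and> 0 < x) (at_right 0)"
    by eventually_elim auto
  then obtain a where a: "1 + \<rho> * ent m a < 0" "a < m" "0 < a"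
    using eventually_happens[of _ "at_right (0::real)"] by auto
  have "\<exists>x. a \<le> x \<and> x \<le> m \<and> 1 + \<rho> * ent m x = 0"
  proof (rule IVT')
    show "continuous_on {a..m} (\<lambda>x. 1 + \<rho> * ent m x)"
      using ent_cont_on[of a m m] a m' by (intro continuous_intros) auto
  qed (use a m' in \<open>auto simp: ent_m\<close>)
  then obtain x where x: "a \<le> x" "x \<le> m" "1 + \<rho> * ent m x = 0" by blast
  have "x \<noteq> m" using x(3) by (auto simp: ent_m)
  hence ex: "x \<in> {0<..<m} \<and> 1 + \<rho> * ent m x = 0" using x a by auto
  have uniq: "y = x" if "y \<in> {0<..<m} \<and> 1 + \<rho> * ent m y = 0" for y
  proof (rule ccontr)
    assume "y \<noteq> x"
    hence "y < x \<or> x < y" by auto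
    thus False
    proof
      assume "y < x"
      hence "ent m y < ent m x" using ent_mono[of y x m] that ex m' by auto
      hence "\<rho> * ent m y < \<rho> * ent m x" using rho by simp
      thus False using that ex by linarith
    next
      assume "x < y"
      hence "ent m x < ent m y" using ent_mono[of x y m] that ex m' by auto
      hence "\<rho> * ent m x < \<rho> * ent m y" using rho by simp
      thus False using that ex by linarith
    qed
  qed
  have "\<exists>!\<nu>. \<nu> \<in> {0<..<m} \<and> 1 + \<rho> * ln (G \<nu> m) = 0"
    unfolding eq using ex uniq by blast
  from theI'[OF this] show ?thesis
    unfolding nu_star_def m_def[symmetric] using eq by blast
qed

lemma asymp_main:
  fixes L ls :: "nat \<Rightarrow> nat"
  assumes m: "0 < m" "m < 1" and g: "0 < g0" "0 < g1" and rho: "0 < \<rho>"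
    and Lpos: "\<And>n. 0 < L n" and Lr: "((\<lambda>n. real (L n) / ln (real n)) \<longlongrightarrow> \<rho>) sequentially"
    and x: "((\<lambda>n. real (ls n) / real (L n)) \<longlongrightarrow> \<nu>) sequentially" and nu: "0 < \<nu>" "\<nu> < 1"
    and c1: "1 + \<rho> * ent m \<nu> > 0" and c2: "1 + \<rho> * (\<nu> * ln g1 + (1 - \<nu>) * ln g0) < 0"
  shows "filterlim (\<lambda>n. real n * (real (L n choose ls n) * (m ^ ls n * (1 - m) ^ (L n - ls n)) -
       real (n - 1) * (real (L n choose ls n) * (m ^ ls n * (1 - m) ^ (L n - ls n)) * (g1 ^ ls n * g0 ^ (L n - ls n)))))
       at_top sequentially"
proof -
  define xs where "xs n = real (ls n) / real (L n)" for n
  define T1 where "T1 n = real n * (real (L n choose ls n) * (m ^ ls n * (1 - m) ^ (L n - ls n)))" for n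
  define T2 where "T2 n = real (n - 1) * (g1 ^ ls n * g0 ^ (L n - ls n))" for n
  have lnn: "filterlim (\<lambda>n. ln (real n)) at_top sequentially"
    by (rule filterlim_compose[OF ln_at_top filterlim_real_sequentially])
  have ev_ln: "eventually (\<lambda>n. 0 < ln (real n)) sequentially"
    using eventually_gt_at_top[of "1::nat"] by eventually_elim simp
  have Lt: "filterlim (\<lambda>n. real (L n)) at_top sequentially"
  proof -
    have "filterlim (\<lambda>n. real (L n) / ln (real n) * ln (real n)) at_top sequentially"
      by (rule filterlim_tendsto_pos_mult_at_top[OF Lr rho lnn])
    moreover have "eventually (\<lambda>n. real (L n) / ln (real n) * ln (real n) = real (L n)) sequentially"
      using ev_ln by eventually_elim simp
    ultimately show ?thesis using filterlim_cong[OF refl refl, of "\<lambda>n. real (L n) / ln (real n) * ln (real n)" "\<lambda>n. real (L n)" sequentially at_top] by simp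
  qed
  have ev01: "eventually (\<lambda>n. 0 < ls n \<and> ls n < L n) sequentially"
  proof -
    have "eventually (\<lambda>n. 0 < xs n) sequentially" "eventually (\<lambda>n. xs n < 1) sequentially"
      using x nu unfolding xs_def[symmetric] by (auto intro: order_tendstoD)
    thus ?thesis
    proof eventually_elim
      case (elim n)
      thus ?case using Lpos[of n] by (auto simp: xs_def zero_less_divide_iff divide_less_eq_1_pos)
    qed
  qed
  have xlim: "(xs \<longlongrightarrow> \<nu>) sequentially" unfolding xs_def[abs_def] using x .
  have entx: "((\<lambda>n. ent m (xs n)) \<longlongrightarrow> ent m \<nu>) sequentially"
    by (rule isCont_tendsto_compose[OF DERIV_isCont[OF ent_deriv[OF nu]] xlim])
  have ratio: "((\<lambda>n. ln (real (L n) + 1) / ln (real n)) \<longlongrightarrow> 0) sequentially"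
  proof -
    have L1: "filterlim (\<lambda>n. real (L n) + 1) at_top sequentially"
      using filterlim_tendsto_add_at_top[OF tendsto_const Lt, of 1] by (simp add: add.commute)
    have a: "((\<lambda>y::real. ln y / y) \<longlongrightarrow> 0) at_top" by real_asymp
    have A: "((\<lambda>n. ln (real (L n) + 1) / (real (L n) + 1)) \<longlongrightarrow> 0) sequentially"
      by (rule filterlim_compose[OF a L1])
    have inv: "((\<lambda>n. 1 / ln (real n)) \<longlongrightarrow> 0) sequentially"
      by (rule tendsto_divide_0[OF tendsto_const lnn[THEN filterlim_at_top_imp_at_infinity]])
    have B: "((\<lambda>n. real (L n) / ln (real n) + 1 / ln (real n)) \<longlongrightarrow> \<rho> + 0) sequentially"
      by (intro tendsto_intros Lr inv)
    have "((\<lambda>n. ln (real (L n) + 1) / (real (L n) + 1) * (real (L n) / ln (real n) + 1 / ln (real n))) \<longlongrightarrow> 0 * (\<rho> + 0)) sequentially"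
      by (intro tendsto_mult A B)
    moreover have "eventually (\<lambda>n. ln (real (L n) + 1) / (real (L n) + 1) * (real (L n) / ln (real n) + 1 / ln (real n)) =
        ln (real (L n) + 1) / ln (real n)) sequentially"
      using ev_ln
    proof eventually_elim
      case (elim n)
      have "real (L n) / ln (real n) + 1 / ln (real n) = (real (L n) + 1) / ln (real n)"
        by (simp add: add_divide_distrib)
      moreover have "real (L n) + 1 \<noteq> 0" by simp
      ultimately show ?case by simp
    qed
    ultimately show ?thesis by (auto intro: Lim_transform_eventually)
  qed
  define E1 where "E1 n = (1 + real (L n) / ln (real n) * ent m (xs n) - ln (real (L n) + 1) / ln (real n)) * ln (real n)" for n
  have E1: "filterlim E1 at_top sequentially"
  proof -
    have "((\<lambda>n. 1 + real (L n) / ln (real n) * ent m (xs n) - ln (real (L n) + 1) / ln (real n)) \<longlongrightarrow>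
          1 + \<rho> * ent m \<nu> - 0) sequentially"
      by (intro tendsto_intros Lr entx ratio)
    thus ?thesis unfolding E1_def using c1 by (intro filterlim_tendsto_pos_mult_at_top[OF _ _ lnn]) auto
  qed
  have T1_ge: "eventually (\<lambda>n. T1 n \<ge> exp (E1 n)) sequentially"
    using ev01 ev_ln eventually_gt_at_top[of "0::nat"]
  proof eventually_elim
    case (elim n)
    hence l: "0 < ls n" "ls n < L n" and n: "0 < n" by auto
    have "T1 n = real n * (real (L n choose ls n) * (xs n ^ ls n * (1 - xs n) ^ (L n - ls n))) * exp (real (L n) * ent m (xs n))"
      unfolding T1_def xs_def pow_ent[OF l m] by (simp add: mult_ac)
    also have "\<dots> \<ge> real n * (1 / (real (L n) + 1)) * exp (real (L n) * ent m (xs n))"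
      by (intro mult_right_mono mult_left_mono) (use binom_mode[OF l] in \<open>auto simp: xs_def\<close>)
    finally have "T1 n \<ge> real n * (1 / (real (L n) + 1)) * exp (real (L n) * ent m (xs n))" .
    moreover have "real n * (1 / (real (L n) + 1)) * exp (real (L n) * ent m (xs n)) = exp (E1 n)"
    proof -
      have "E1 n = ln (real n) + real (L n) / ln (real n) * ln (real n) * ent m (xs n) - ln (real (L n) + 1) / ln (real n) * ln (real n)"
        by (simp add: E1_def algebra_simps)
      also have "\<dots> = ln (real n) + real (L n) * ent m (xs n) - ln (real (L n) + 1)"
        using elim by simp
      finally have "exp (E1 n) = exp (ln (real n)) * exp (real (L n) * ent m (xs n)) / exp (ln (real (L n) + 1))"
        by (simp add: exp_add exp_diff)
      also have "\<dots> = real n * exp (real (L n) * ent m (xs n)) / (real (L n) + 1)"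
        using n by simp
      finally show ?thesis by simp
    qed
    ultimately show ?case by simp
  qed
  have T1: "filterlim T1 at_top sequentially"
    by (rule filterlim_at_top_mono[OF filterlim_compose[OF exp_at_top E1] T1_ge])
  define E2 where "E2 n = (1 + real (L n) / ln (real n) * (xs n * ln g1 + (1 - xs n) * ln g0)) * ln (real n)" for n
  have E2: "filterlim E2 at_bot sequentially"
  proof -
    have "((\<lambda>n. 1 + real (L n) / ln (real n) * (xs n * ln g1 + (1 - xs n) * ln g0)) \<longlongrightarrow>
          1 + \<rho> * (\<nu> * ln g1 + (1 - \<nu>) * ln g0)) sequentially"
      by (intro tendsto_intros Lr xlim)
    thus ?thesis unfolding E2_def using c2 by (intro filterlim_tendsto_neg_mult_at_bot[OF _ _ lnn]) auto
  qed
  have T2_le: "eventually (\<lambda>n. T2 n \<le> exp (E2 n)) sequentially"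
    using ev01 ev_ln eventually_gt_at_top[of "0::nat"]
  proof eventually_elim
    case (elim n)
    hence l: "0 < ls n" "ls n < L n" and n: "0 < n" by auto
    have Lx: "real (L n) * xs n = real (ls n)" "real (L n) * (1 - xs n) = real (L n - ls n)"
      using l by (auto simp: xs_def right_diff_distrib of_nat_diff)
    have "E2 n = ln (real n) + real (L n) / ln (real n) * ln (real n) * (xs n * ln g1 + (1 - xs n) * ln g0)"
      by (simp add: E2_def algebra_simps)
    also have "\<dots> = ln (real n) + (real (L n) * xs n) * ln g1 + (real (L n) * (1 - xs n)) * ln g0"
      using elim by (simp add: algebra_simps)
    finally have "E2 n = ln (real n) + real (ls n) * ln g1 + real (L n - ls n) * ln g0"
      unfolding Lx .
    hence "exp (E2 n) = real n * (g1 ^ ls n * g0 ^ (L n - ls n))"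
      using n g by (simp add: exp_add exp_of_nat_mult)
    moreover have "T2 n \<le> real n * (g1 ^ ls n * g0 ^ (L n - ls n))"
      unfolding T2_def using g by (intro mult_right_mono) auto
    ultimately show ?case by simp
  qed
  have T2: "(T2 \<longlongrightarrow> 0) sequentially"
  proof (rule tendsto_sandwich[OF _ T2_le])
    show "eventually (\<lambda>n. 0 \<le> T2 n) sequentially" using g by (auto simp: T2_def)
    show "((\<lambda>n. exp (E2 n)) \<longlongrightarrow> 0) sequentially"
      by (rule filterlim_compose[OF exp_at_bot E2])
  qed simp
  have "filterlim (\<lambda>n. (1 - T2 n) * T1 n) at_top sequentially"
    by (rule filterlim_tendsto_pos_mult_at_top[OF _ _ T1]) (use T2 in \<open>auto intro!: tendsto_eq_intros\<close>)
  moreover have "(1 - T2 n) * T1 n = real n * (real (L n choose ls n) * (m ^ ls n * (1 - m) ^ (L n - ls n)) -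
       real (n - 1) * (real (L n choose ls n) * (m ^ ls n * (1 - m) ^ (L n - ls n)) * (g1 ^ ls n * g0 ^ (L n - ls n))))" for n
    by (simp add: T1_def T2_def algebra_simps)
  ultimately show ?thesis by simp
qed


theorem proposition4:
  fixes mu :: "nat \<Rightarrow> real" and q :: "nat \<Rightarrow> nat \<Rightarrow> real" and \<rho> :: real and L :: "nat \<Rightarrow> nat"
  assumes mu_pos: "0 < mu 0" "mu 0 < 1" "0 < mu 1" "mu 1 < 1"
    and mu_sum: "mu 0 + mu 1 = 1"
    and q_sym: "q 0 1 = q 1 0"
    and q_range: "\<And>a b. a \<in> {0, 1} \<Longrightarrow> b \<in> {0, 1} \<Longrightarrow> 0 < q a b \<and> q a b < 1"
    and rho_pos: "0 < \<rho>"
    and Gam_lt: "Gam mu q 0 < Gam mu q 1"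
    and mu0_cond: "1 + \<rho> * ln (mu 0) < 0"
    and star_cond: "1 + \<rho> * ln (Gam mu q 1 powr nu_star mu \<rho> * Gam mu q 0 powr (1 - nu_star mu \<rho>)) < 0"
    and adm: "admissible \<rho> L"
  shows "\<exists>\<nu>\<in>{nu_star mu \<rho><..<mu 1}. \<forall>ls. associated \<nu> L ls \<longrightarrow>
           filterlim (\<lambda>n. expected_isolated mu q n (L n) (ls n)) at_top sequentially"
proof -
  define m where "m = mu 1"
  have m: "0 < m" "m < 1" and mu0: "mu 0 = 1 - m" using mu_pos mu_sum by (auto simp: m_def)
  define g0 where "g0 = Gam mu q 0"
  define g1 where "g1 = Gam mu q 1"
  have g0: "0 < g0" unfolding g0_def Gam_def using mu_pos q_range[of 0 0] q_range[of 0 1]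
    by (intro add_pos_pos mult_pos_pos) auto
  have g1: "0 < g1" unfolding g1_def Gam_def using mu_pos q_range[of 1 0] q_range[of 1 1]
    by (intro add_pos_pos mult_pos_pos) auto
  have glt: "g0 < g1" using Gam_lt by (simp add: g0_def g1_def)
  define ns where "ns = nu_star mu \<rho>"
  have ns: "ns \<in> {0<..<m}" "1 + \<rho> * ent m ns = 0"
    using nu_star_props[of mu \<rho>] mu_pos rho_pos mu0_cond mu0 by (auto simp: ns_def m_def)
  define sst where "sst = 1 + \<rho> * (ns * ln g1 + (1 - ns) * ln g0)"
  have sst: "sst < 0"
  proof -
    have "ln (g1 powr ns * g0 powr (1 - ns)) = ns * ln g1 + (1 - ns) * ln g0"
      using g0 g1 by (simp add: ln_mult ln_powr)
    thus ?thesis using star_cond by (simp add: sst_def g0_def g1_def ns_def)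
  qed
  define D where "D = ln g1 - ln g0"
  have D: "0 < D" using glt g0 by (simp add: D_def)
  define \<nu> where "\<nu> = ns + min ((m - ns) / 2) (- sst / (2 * \<rho> * D))"
  have dpos: "0 < min ((m - ns) / 2) (- sst / (2 * \<rho> * D))"
  proof -
    have "0 < 2 * \<rho> * D" using D rho_pos by simp
    hence "0 < - sst / (2 * \<rho> * D)" using sst by (intro divide_pos_pos) auto
    moreover have "0 < (m - ns) / 2" using ns by simp
    ultimately show ?thesis by simp
  qed
  define d where "d = min ((m - ns) / 2) (- sst / (2 * \<rho> * D))"
  have "d \<le> (m - ns) / 2" unfolding d_def by (rule min.cobounded1)
  moreover have "ns < m" using ns by simp
  moreover have "\<nu> = ns + d" by (simp add: \<nu>_def d_def)
  moreover have "0 < d" using dpos by (simp add: d_def)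
  ultimately have nu: "ns < \<nu>" "\<nu> < m" by (simp_all add: field_simps)
  have c1: "1 + \<rho> * ent m \<nu> > 0"
  proof -
    have "ent m ns < ent m \<nu>" using ent_mono[of ns \<nu> m] ns nu m by auto
    hence "\<rho> * ent m ns < \<rho> * ent m \<nu>" using rho_pos by simp
    thus ?thesis using ns by linarith
  qed
  have c2: "1 + \<rho> * (\<nu> * ln g1 + (1 - \<nu>) * ln g0) < 0"
  proof -
    have "1 + \<rho> * (\<nu> * ln g1 + (1 - \<nu>) * ln g0) = sst + \<rho> * D * (\<nu> - ns)"
      by (simp add: sst_def D_def algebra_simps)
    also have "\<rho> * D * (\<nu> - ns) \<le> \<rho> * D * (- sst / (2 * \<rho> * D))"
      using rho_pos D by (intro mult_left_mono) (auto simp: \<nu>_def)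
    also have "\<rho> * D * (- sst / (2 * \<rho> * D)) = - sst / 2"
      using rho_pos D by (simp add: field_simps)
    finally show ?thesis using sst by linarith
  qed
  have Lpos: "\<And>n. 0 < L n" and Leq: "(\<lambda>n. real (L n)) \<sim>[sequentially] (\<lambda>n. \<rho> * ln (real n))"
    using adm by (auto simp: admissible_def)
  have Lr: "((\<lambda>n. real (L n) / ln (real n)) \<longlongrightarrow> \<rho>) sequentially"
  proof -
    have "((\<lambda>n. if real (L n) = 0 \<and> \<rho> * ln (real n) = 0 then 1 else real (L n) / (\<rho> * ln (real n))) \<longlongrightarrow> 1) sequentially"
      by (rule asymp_equivD[OF Leq])
    moreover have "(\<lambda>n. if real (L n) = 0 \<and> \<rho> * ln (real n) = 0 then 1 else real (L n) / (\<rho> * ln (real n))) =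
        (\<lambda>n. real (L n) / (\<rho> * ln (real n)))"
    proof
      fix n have "L n \<noteq> 0" using Lpos[of n] by simp
      thus "(if real (L n) = 0 \<and> \<rho> * ln (real n) = 0 then 1 else real (L n) / (\<rho> * ln (real n))) =
        real (L n) / (\<rho> * ln (real n))" by simp
    qed
    ultimately have "((\<lambda>n. real (L n) / (\<rho> * ln (real n))) \<longlongrightarrow> 1) sequentially" by simp
    hence "((\<lambda>n. \<rho> * (real (L n) / (\<rho> * ln (real n)))) \<longlongrightarrow> \<rho> * 1) sequentially"
      by (rule tendsto_mult_left)
    thus ?thesis using rho_pos by simp
  qed
  show ?thesis
  proof (rule bexI[of _ \<nu>])
    show "\<nu> \<in> {nu_star mu \<rho><..<mu 1}" using nu by (simp add: ns_def m_def)
    show "\<forall>ls. associated \<nu> L ls \<longrightarrow> filterlim (\<lambda>n. expected_isolated mu q n (L n) (ls n)) at_top sequentially"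
    proof (intro allI impI)
      fix ls assume "associated \<nu> L ls"
      hence x: "((\<lambda>n. real (ls n) / real (L n)) \<longlongrightarrow> \<nu>) sequentially" by (simp add: associated_def)
      have lim: "filterlim (\<lambda>n. real n * (real (L n choose ls n) * (m ^ ls n * (1 - m) ^ (L n - ls n)) -
         real (n - 1) * (real (L n choose ls n) * (m ^ ls n * (1 - m) ^ (L n - ls n)) * (g1 ^ ls n * g0 ^ (L n - ls n)))))
         at_top sequentially"
        by (rule asymp_main[OF m g0 g1 rho_pos Lpos Lr x]) (use nu ns m c1 c2 in auto)
      show "filterlim (\<lambda>n. expected_isolated mu q n (L n) (ls n)) at_top sequentially"
      proof (rule filterlim_at_top_mono[OF lim], intro always_eventually allI)
        fix n
        show "real n * (real (L n choose ls n) * (m ^ ls n * (1 - m) ^ (L n - ls n)) -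
         real (n - 1) * (real (L n choose ls n) * (m ^ ls n * (1 - m) ^ (L n - ls n)) * (g1 ^ ls n * g0 ^ (L n - ls n))))
           \<le> expected_isolated mu q n (L n) (ls n)"
          using expected_lower[of mu q n "L n" "ls n"] mu_pos mu_sum q_range
          unfolding m_def[symmetric] mu0 g0_def[symmetric] g1_def[symmetric]
          by (auto simp: less_imp_le)
      qed
    qed
  qed
qed

end
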